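(* Let $T_{23}=\mathbf{e}^1_1\otimes(\mathbf{e}^2_1\otimes\mathbf{e}^3_1+\mathbf{e}^2_2\otimes\mathbf{e}^3_2+\mathbf{e}^2_3\otimes\mathbf{e}^3_3)+\mathbf{e}^1_2\otimes(\mathbf{e}^2_1\otimes\mathbf{e}^3_2+\mathbf{e}^2_2\otimes\mathbf{e}^3_3+\mathbf{e}^2_3\otimes\mathbf{e}^3_4)\in\mathbb{C}^2\otimes\mathbb{C}^3\otimes\mathbb{C}^4$ (a tensor of rank $4$). Put $\psi(\mathbf{a},\mathbf{b},\mathbf{c})=a_1b_1c_1+a_1b_2c_2+a_1b_3c_3+a_2b_3c_4$ and $\Delta(\mathbf{c})=-c_2^2c_3^2+4c_1c_3^3+4c_2^3c_4-18c_1c_2c_3c_4+27c_1^2c_4^2$. Then a rank-one tensor $P=\mathbf{a}\otimes\mathbf{b}\otimes\mathbf{c}$ lies in the decomposition locus of $T_{23}$ if and only if \[ b_2^2-b_1b_3=0,\quad a_2b_2-a_1b_3=0,\quad a_2b_1-a_1b_2=0,\quad \psi(\mathbf{a},\mathbf{b},\mathbf{c})\neq0,\quad \Delta(\mathbf{c})\neq 0. \]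
   Context: $\mathbf{e}^i_j$ is the $j$-th standard basis vector of the $i$-th factor and $\mathbf{a}=(a_1,a_2)$, $\mathbf{b}=(b_1,b_2,b_3)$, $\mathbf{c}=(c_1,\dots,c_4)$ are nonzero coordinate vectors. The rank of a tensor is the minimal number of rank-one tensors summing to it; $P$ is in the decomposition locus of $T$ if $\mathrm{rk}(T-\lambda P)=\mathrm{rk}(T)-1$ for some $\lambda\in\mathbb{C}$. *)

theory Defs
  imports Complex_Main
begin

text \<open>Tensors in C^2 (x) C^3 (x) C^4 are represented as functions
  nat => nat => nat => complex with 1-based indices; only the entries with
  1 <= i <= 2, 1 <= j <= 3, 1 <= k <= 4 are meaningful (all others are 0).
  Coordinate vectors are functions nat => complex (a i = a_i), of which only the
  coordinates in the relevant index range are used.\<close>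

type_synonym tensor = "nat \<Rightarrow> nat \<Rightarrow> nat \<Rightarrow> complex"

definition in_box :: "nat \<Rightarrow> nat \<Rightarrow> nat \<Rightarrow> bool" where
  "in_box i j k \<longleftrightarrow> 1 \<le> i \<and> i \<le> 2 \<and> 1 \<le> j \<and> j \<le> 3 \<and> 1 \<le> k \<and> k \<le> 4"

definition outer3 :: "(nat \<Rightarrow> complex) \<Rightarrow> (nat \<Rightarrow> complex) \<Rightarrow> (nat \<Rightarrow> complex) \<Rightarrow> tensor" where
  "outer3 a b c = (\<lambda>i j k. if in_box i j k then a i * b j * c k else 0)"

definition nonzero_vec :: "nat \<Rightarrow> (nat \<Rightarrow> complex) \<Rightarrow> bool" where
  "nonzero_vec n v \<longleftrightarrow> (\<exists>i. 1 \<le> i \<and> i \<le> n \<and> v i \<noteq> 0)"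

definition tensor_rank :: "tensor \<Rightarrow> nat" where
  "tensor_rank T = (LEAST r. \<exists>a b c :: nat \<Rightarrow> nat \<Rightarrow> complex.
      T = (\<lambda>i j k. \<Sum>l<r. outer3 (a l) (b l) (c l) i j k))"

definition decomposition_locus :: "tensor \<Rightarrow> tensor set" where
  "decomposition_locus T = {P. (\<exists>a b c. nonzero_vec 2 a \<and> nonzero_vec 3 b \<and> nonzero_vec 4 c
       \<and> P = outer3 a b c)
     \<and> (\<exists>t::complex. tensor_rank (\<lambda>i j k. T i j k - t * P i j k) = tensor_rank T - 1)}"

definition e :: "nat \<Rightarrow> nat \<Rightarrow> complex" where
  "e j = (\<lambda>i. if i = j then 1 else 0)"

definition T23 :: tensor where
  "T23 = (\<lambda>i j k. outer3 (e 1) (e 1) (e 1) i j k + outer3 (e 1) (e 2) (e 2) i j k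
                 + outer3 (e 1) (e 3) (e 3) i j k + outer3 (e 2) (e 1) (e 2) i j k
                 + outer3 (e 2) (e 2) (e 3) i j k + outer3 (e 2) (e 3) (e 4) i j k)"

definition psi :: "(nat \<Rightarrow> complex) \<Rightarrow> (nat \<Rightarrow> complex) \<Rightarrow> (nat \<Rightarrow> complex) \<Rightarrow> complex" where
  "psi a b c = a 1 * b 1 * c 1 + a 1 * b 2 * c 2 + a 1 * b 3 * c 3 + a 2 * b 3 * c 4"

definition Delta :: "(nat \<Rightarrow> complex) \<Rightarrow> complex" where
  "Delta c = - ((c 2)^2 * (c 3)^2) + 4 * c 1 * (c 3)^3 + 4 * (c 2)^3 * c 4
             - 18 * c 1 * c 2 * c 3 * c 4 + 27 * (c 1)^2 * (c 4)^2"

end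

theory Submission imports Defs "HOL-Analysis.Analysis" "HOL-Computational_Algebra.Fundamental_Theorem_Algebra" begin


lemma sum4: "(\<Sum>k::nat=1..4. f k) = f 1 + f 2 + f 3 + (f 4 :: 'a::comm_monoid_add)"
  by (simp add: eval_nat_numeral add.assoc)

lemma sum3: "(\<Sum>l<(3::nat). f l) = f 0 + f 1 + (f 2 :: 'a::comm_monoid_add)"
  by (simp add: eval_nat_numeral add.assoc)

lemma T23_box: "in_box i j k \<Longrightarrow> T23 i j k = (if k = i + j - 1 then 1 else 0)"
  unfolding in_box_def
  by (cases "i = 1"; cases "j = 1"; cases "j = 2"; auto simp: T23_def outer3_def e_def in_box_def)

lemma T23_out: "\<not> in_box i j k \<Longrightarrow> T23 i j k = 0"
  by (simp add: T23_def outer3_def)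

lemma solve4:
  fixes m :: "nat \<Rightarrow> nat \<Rightarrow> complex"
  assumes inj: "\<And>x. (\<forall>i\<in>{1..4}. (\<Sum>k=1..4. m i k * x k) = 0) \<Longrightarrow> \<forall>k\<in>{1..4}. x k = 0"
  shows "\<exists>x. \<forall>i\<in>{1..4}. (\<Sum>k=1..4. m i k * x k) = y i"
proof -
  define h :: "4 \<Rightarrow> nat" where "h i = (if i = 1 then 1 else if i = 2 then 2 else if i = 3 then 3 else 4)" for i
  define g :: "nat \<Rightarrow> 4" where "g k = (if k = 1 then 1 else if k = 2 then 2 else if k = 3 then 3 else 4)" for k
  have h1: "h 1 = 1" "h 2 = 2" "h 3 = 3" "h 4 = 4" by (simp_all add: h_def)
  have g1: "g 1 = 1" "g 2 = 2" "g 3 = 3" "g 4 = 4" by (simp_all add: g_def)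
  have hg: "h (g i) = i" if "i \<in> {1..4}" for i
  proof -
    from that have "i = 1 \<or> i = 2 \<or> i = 3 \<or> i = 4" by auto
    then show ?thesis using g1 h1 by auto
  qed
  define A :: "complex^4^4" where "A = (\<chi> i j. m (h i) (h j))"
  have Av: "(A *v x) $ i = (\<Sum>k=1..4. m (h i) k * x $ g k)" for x i
    unfolding sum4 by (simp add: A_def matrix_vector_mult_def sum_4 h1 g_def)
  have "\<forall>x. A *v x = 0 \<longrightarrow> x = 0"
  proof (intro allI impI)
    fix x assume x0: "A *v x = 0"
    have "\<forall>i\<in>{1..4}. (\<Sum>k=1..4. m i k * x $ g k) = 0"
    proof
      fix i :: nat assume i: "i \<in> {1..4}"
      have "(A *v x) $ g i = 0" using x0 by simp
      then show "(\<Sum>k=1..4. m i k * x $ g k) = 0"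
        unfolding Av hg[OF i] .
    qed
    then have "\<forall>k\<in>{1..4}. x $ g k = 0" by (rule inj)
    then have "x $ g 1 = 0 \<and> x $ g 2 = 0 \<and> x $ g 3 = 0 \<and> x $ g 4 = 0" by simp
    then have "x $ 1 = 0 \<and> x $ 2 = 0 \<and> x $ 3 = 0 \<and> x $ 4 = 0" unfolding g1 .
    then show "x = 0" by (simp add: vec_eq_iff forall_4)
  qed
  then have "invertible A"
    by (simp add: invertible_left_inverse matrix_left_invertible_ker)
  then obtain B where AB: "A ** B = mat 1" by (auto simp: invertible_right_inverse)
  define yv :: "complex^4" where "yv = (\<chi> i. y (h i))"
  define xv where "xv = B *v yv"
  have e: "A *v xv = yv" by (simp add: xv_def matrix_vector_mul_assoc AB)
  have "\<forall>i\<in>{1..4}. (\<Sum>k=1..4. m i k * xv $ g k) = y i"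
  proof
    fix i :: nat assume i: "i \<in> {1..4}"
    have "(A *v xv) $ g i = y i" using e hg[OF i] by (simp add: yv_def)
    then show "(\<Sum>k=1..4. m i k * xv $ g k) = y i"
      unfolding Av hg[OF i] .
  qed
  then show ?thesis by - (rule exI[where x="\<lambda>k. xv $ g k"], simp)
qed

definition dot4 :: "(nat \<Rightarrow> complex) \<Rightarrow> (nat \<Rightarrow> complex) \<Rightarrow> complex" where
  "dot4 c x = c 1 * x 1 + c 2 * x 2 + c 3 * x 3 + c 4 * x 4"

lemma ball14: "(\<forall>i\<in>{1..4::nat}. P i) \<longleftrightarrow> P 1 \<and> P 2 \<and> P 3 \<and> P 4"
proof -
  have "{1..4::nat} = {1,2,3,4}" by auto
  then show ?thesis by auto
qed

lemma solve4d:
  fixes m :: "nat \<Rightarrow> nat \<Rightarrow> complex"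
  assumes inj: "\<And>x. dot4 (m 1) x = 0 \<Longrightarrow> dot4 (m 2) x = 0 \<Longrightarrow> dot4 (m 3) x = 0 \<Longrightarrow> dot4 (m 4) x = 0
     \<Longrightarrow> x 1 = 0 \<and> x 2 = 0 \<and> x 3 = 0 \<and> x 4 = 0"
  shows "\<exists>x. dot4 (m 1) x = ya \<and> dot4 (m 2) x = yb \<and> dot4 (m 3) x = yc \<and> dot4 (m 4) x = yd"
proof -
  have ds: "(\<Sum>k=1..4. m i k * x k) = dot4 (m i) x" for i x
    unfolding sum4 dot4_def ..
  have "\<exists>x. \<forall>i\<in>{1..4}. (\<Sum>k=1..4. m i k * x k) =
     (\<lambda>i. if i = 1 then ya else if i = 2 then yb else if i = 3 then yc else yd) i"
    apply (rule solve4)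
    unfolding ds ball14 using inj by blast
  then show ?thesis unfolding ds ball14 by auto
qed

lemma ker3:
  "\<exists>x. (x 1 \<noteq> 0 \<or> x 2 \<noteq> 0 \<or> x 3 \<noteq> 0 \<or> x 4 \<noteq> 0) \<and> dot4 u x = 0 \<and> dot4 v x = 0 \<and> dot4 w x = 0"
proof (rule ccontr)
  assume H: "\<not> ?thesis"
  define m where "m = (\<lambda>i::nat. if i = 1 then u else if i = 2 then v else if i = 3 then w else (\<lambda>_. 0))"
  have "\<exists>x. dot4 (m 1) x = 0 \<and> dot4 (m 2) x = 0 \<and> dot4 (m 3) x = 0 \<and> dot4 (m 4) x = 1"
    apply (rule solve4d)
    using H by (auto simp: m_def)
  then show False by (auto simp: m_def dot4_def)
qed

definition decomp :: "tensor \<Rightarrow> nat \<Rightarrow> bool" where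
  "decomp S r \<longleftrightarrow> (\<exists>a b c :: nat \<Rightarrow> nat \<Rightarrow> complex.
      S = (\<lambda>i j k. \<Sum>l<r. outer3 (a l) (b l) (c l) i j k))"

lemma rank_eq:
  assumes "decomp S n" "\<And>r. r < n \<Longrightarrow> \<not> decomp S r"
  shows "tensor_rank S = n"
  unfolding tensor_rank_def
  apply (rule Least_equality)
  using assms unfolding decomp_def by (auto simp: not_less[symmetric])

lemma rank_decomp:
  assumes "decomp S n"
  shows "decomp S (tensor_rank S)"
  unfolding tensor_rank_def
  using LeastI_ex[of "\<lambda>r. decomp S r"] assms unfolding decomp_def by blast

lemma contr:
  assumes "S = (\<lambda>i j k. \<Sum>l<r. outer3 (A l) (B l) (C l) i j k)" "1 \<le> i" "i \<le> 2" "1 \<le> j" "j \<le> 3"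
  shows "S i j 1 * x 1 + S i j 2 * x 2 + S i j 3 * x 3 + S i j 4 * x 4 = (\<Sum>l<r. A l i * B l j * dot4 (C l) x)"
proof -
  have Sk: "S i j k = (\<Sum>l<r. A l i * B l j * C l k)" if "1 \<le> k" "k \<le> 4" for k
    using assms(2-) that by (simp add: assms(1) outer3_def in_box_def)
  have "S i j 1 * x 1 + S i j 2 * x 2 + S i j 3 * x 3 + S i j 4 * x 4 =
     (\<Sum>l<r. A l i * B l j * C l 1) * x 1 + (\<Sum>l<r. A l i * B l j * C l 2) * x 2
     + (\<Sum>l<r. A l i * B l j * C l 3) * x 3 + (\<Sum>l<r. A l i * B l j * C l 4) * x 4"
    by (simp add: Sk)
  also have "\<dots> = (\<Sum>l<r. A l i * B l j * dot4 (C l) x)"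
    unfolding dot4_def sum_distrib_right distrib_left sum.distrib[symmetric] by (simp add: mult.assoc)
  finally show ?thesis .
qed

lemma contrT:
  assumes "1 \<le> i" "i \<le> 2" "1 \<le> j" "j \<le> 3"
  shows "(T23 i j 1 - t * outer3 a b c i j 1) * x 1 + (T23 i j 2 - t * outer3 a b c i j 2) * x 2
     + (T23 i j 3 - t * outer3 a b c i j 3) * x 3 + (T23 i j 4 - t * outer3 a b c i j 4) * x 4
     = x (i + j - 1) - t * a i * b j * dot4 c x"
proof -
  have ib: "in_box i j k" if "1 \<le> k" "k \<le> 4" for k using assms that by (simp add: in_box_def)
  have o: "outer3 a b c i j k = a i * b j * c k" if "1 \<le> k" "k \<le> 4" for k
    using ib[OF that] by (simp add: outer3_def)
  have T: "T23 i j k = (if k = i + j - 1 then 1 else 0)" if "1 \<le> k" "k \<le> 4" for k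
    using T23_box[OF ib[OF that]] .
  define m where "m = i + j - 1"
  have "m = 1 \<or> m = 2 \<or> m = 3 \<or> m = 4" using assms unfolding m_def by linarith
  moreover have e: "outer3 a b c i j 1 = a i * b j * c 1" "outer3 a b c i j 2 = a i * b j * c 2"
    "outer3 a b c i j 3 = a i * b j * c 3" "outer3 a b c i j 4 = a i * b j * c 4"
    by (rule o; simp)+
  moreover have f: "T23 i j 1 = (if 1 = m then 1 else 0)" "T23 i j 2 = (if 2 = m then 1 else 0)"
    "T23 i j 3 = (if 3 = m then 1 else 0)" "T23 i j 4 = (if 4 = m then 1 else 0)"
    unfolding m_def by (rule T; simp)+
  ultimately show ?thesis
    unfolding m_def[symmetric] dot4_def e f
    by (elim disjE) (simp_all add: algebra_simps)
qed

lemma key: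
  assumes "(\<lambda>i j k. T23 i j k - t * outer3 a b c i j k) = (\<lambda>i j k. \<Sum>l<r. outer3 (A l) (B l) (C l) i j k)"
    "1 \<le> i" "i \<le> 2" "1 \<le> j" "j \<le> 3"
  shows "x (i + j - 1) - t * a i * b j * dot4 c x = (\<Sum>l<r. A l i * B l j * dot4 (C l) x)"
  using contr[where S="\<lambda>i j k. T23 i j k - t * outer3 a b c i j k" and r=r and A=A and B=B and C=C and i=i and j=j and x=x, OF assms(1) assms(2-5)] contrT[OF assms(2-5), of t a b c x] by simp


lemma key':
  assumes "(\<lambda>i j k. T23 i j k - t * outer3 a b c i j k) = (\<lambda>i j k. \<Sum>l<r. outer3 (A l) (B l) (C l) i j k)"
    "1 \<le> i" "i \<le> 2" "1 \<le> j" "j \<le> 3" "i + j = m + 1"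
  shows "x m - t * a i * b j * dot4 c x = (\<Sum>l<r. A l i * B l j * dot4 (C l) x)"
proof -
  have "m = i + j - 1" using assms(6) by simp
  then show ?thesis using key[OF assms(1-5)] by simp
qed

lemma sum_lt4: "(\<Sum>l<(4::nat). f l) = f 0 + f 1 + f 2 + (f 3 :: 'a::comm_monoid_add)"
  by (simp add: eval_nat_numeral add.assoc)

lemma Fge3:
  assumes "decomp (\<lambda>i j k. T23 i j k - t * outer3 a b c i j k) r"
  shows "3 \<le> r"
proof (rule ccontr)
  assume "\<not> 3 \<le> r"
  then have r: "r \<le> 2" by simp
  obtain A B C where d: "(\<lambda>i j k. T23 i j k - t * outer3 a b c i j k) = (\<lambda>i j k. \<Sum>l<r. outer3 (A l) (B l) (C l) i j k)"
    using assms unfolding decomp_def by blast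
  define U where "U l = (if l < r then C l else c)" for l
  obtain x where nz: "x 1 \<noteq> 0 \<or> x 2 \<noteq> 0 \<or> x 3 \<noteq> 0 \<or> x 4 \<noteq> 0"
    and h: "dot4 (U 0) x = 0" "dot4 (U 1) x = 0" "dot4 c x = 0"
    using ker3 by blast
  have z: "dot4 (C l) x = 0" if "l < r" for l
  proof -
    have "l = 0 \<or> l = 1" using that r by linarith
    then show ?thesis using h that by (auto simp: U_def)
  qed
  have s0: "(\<Sum>l<r. A l i * B l j * dot4 (C l) x) = 0" for i j by (simp add: z)
  have "x 1 = 0" using key'[OF d, of 1 1 1 x] h(3) s0 by simp
  moreover have "x 2 = 0" using key'[OF d, of 1 2 2 x] h(3) s0 by simp
  moreover have "x 3 = 0" using key'[OF d, of 1 3 3 x] h(3) s0 by simp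
  moreover have "x 4 = 0" using key'[OF d, of 2 3 4 x] h(3) s0 by simp
  ultimately show False using nz by simp
qed

lemma Fle3:
  assumes "decomp (\<lambda>i j k. T23 i j k - t * outer3 a b c i j k) r" "r \<le> 3"
  shows "t * psi a b c = 1 \<and> a 2 * b 2 - a 1 * b 3 = 0 \<and> a 2 * b 1 - a 1 * b 2 = 0"
proof -
  obtain A B C where d: "(\<lambda>i j k. T23 i j k - t * outer3 a b c i j k) = (\<lambda>i j k. \<Sum>l<r. outer3 (A l) (B l) (C l) i j k)"
    using assms unfolding decomp_def by blast
  define U where "U l = (if l < r then C l else (\<lambda>_. 0))" for l
  obtain x where nz: "x 1 \<noteq> 0 \<or> x 2 \<noteq> 0 \<or> x 3 \<noteq> 0 \<or> x 4 \<noteq> 0"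
    and h: "dot4 (U 0) x = 0" "dot4 (U 1) x = 0" "dot4 (U 2) x = 0"
    using ker3 by blast
  have z: "dot4 (C l) x = 0" if "l < r" for l
  proof -
    have "l = 0 \<or> l = 1 \<or> l = 2" using that assms(2) by linarith
    then show ?thesis using h that by (auto simp: U_def)
  qed
  have s0: "(\<Sum>l<r. A l i * B l j * dot4 (C l) x) = 0" for i j by (simp add: z)
  have e1: "x 1 - t * a 1 * b 1 * dot4 c x = 0" using key'[OF d, of 1 1 1 x] s0 by simp
  have e2: "x 2 - t * a 1 * b 2 * dot4 c x = 0" using key'[OF d, of 1 2 2 x] s0 by simp
  have e3: "x 2 - t * a 2 * b 1 * dot4 c x = 0" using key'[OF d, of 2 1 2 x] s0 by simp
  have e4: "x 3 - t * a 1 * b 3 * dot4 c x = 0" using key'[OF d, of 1 3 3 x] s0 by simp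
  have e5: "x 3 - t * a 2 * b 2 * dot4 c x = 0" using key'[OF d, of 2 2 3 x] s0 by simp
  have e6: "x 4 - t * a 2 * b 3 * dot4 c x = 0" using key'[OF d, of 2 3 4 x] s0 by simp
  have sd: "dot4 c x = c 1 * x 1 + c 2 * x 2 + c 3 * x 3 + c 4 * x 4" by (simp add: dot4_def)
  show ?thesis unfolding psi_def using e1 e2 e3 e4 e5 e6 sd nz by algebra
qed

lemma T23_decomp: "decomp T23 4"
proof -
  define A :: "nat \<Rightarrow> nat \<Rightarrow> complex" where "A l i = (if l = 0 then (if i = 1 then 1 else 0)
     else if l = 1 then (if i = 2 then 1 else 0) else if l = 2 then 1 else (if i = 1 then 1 else -1))" for l i
  define B :: "nat \<Rightarrow> nat \<Rightarrow> complex" where "B l j = (if l = 0 then (if j = 1 then 1 else 0)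
     else if l = 1 then (if j = 3 then 1 else 0) else if l = 2 then 1 else (if j = 2 then -1 else 1))" for l j
  define C :: "nat \<Rightarrow> nat \<Rightarrow> complex" where "C l k = (if l = 0 then (if k = 1 then 1 else if k = 3 then -1 else 0)
     else if l = 1 then (if k = 4 then 1 else if k = 2 then -1 else 0)
     else if l = 2 then (if k = 2 then 1/2 else if k = 3 then 1/2 else 0)
     else (if k = 3 then 1/2 else if k = 2 then -1/2 else 0))" for l k
  have "T23 i j k = (\<Sum>l<4. outer3 (A l) (B l) (C l) i j k)" for i j k
  proof (cases "in_box i j k")
    case True
    then have "(i = 1 \<or> i = 2) \<and> (j = 1 \<or> j = 2 \<or> j = 3) \<and> (k = 1 \<or> k = 2 \<or> k = 3 \<or> k = 4)"
      unfolding in_box_def by auto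
    then show ?thesis using True unfolding sum_lt4
      by (elim conjE disjE) (simp_all add: T23_box outer3_def A_def B_def C_def in_box_def)
  next
    case False
    then show ?thesis by (simp add: T23_out outer3_def)
  qed
  then show ?thesis unfolding decomp_def by blast
qed

lemma T23_rank: "tensor_rank T23 = 4"
proof (rule rank_eq[OF T23_decomp])
  fix r :: nat assume "r < 4"
  show "\<not> decomp T23 r"
  proof
    assume "decomp T23 r"
    moreover have "(\<lambda>i j k. T23 i j k - 0 * outer3 (\<lambda>_. 0) (\<lambda>_. 0) (\<lambda>_. 0) i j k) = T23" by simp
    ultimately have "decomp (\<lambda>i j k. T23 i j k - 0 * outer3 (\<lambda>_. 0) (\<lambda>_. 0) (\<lambda>_. 0) i j k) r" by simp
    from Fle3[OF this] \<open>r < 4\<close> show False by simp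
  qed
qed



definition fc :: "(nat \<Rightarrow> complex) \<Rightarrow> complex \<Rightarrow> complex \<Rightarrow> complex" where
  "fc c u s = c 1 * u^3 + c 2 * u^2 * s + c 3 * u * s^2 + c 4 * s^3"

lemma fc1: "fc c 1 r = c 1 + c 2 * r + c 3 * r^2 + c 4 * r^3" by (simp add: fc_def)

lemma roots:
  assumes D: "Delta c \<noteq> 0"
  shows "\<exists>u1 s1 u2 s2 u3 s3. fc c u1 s1 = 0 \<and> fc c u2 s2 = 0 \<and> fc c u3 s3 = 0 \<and>
     u1* s2 - u2* s1 \<noteq> 0 \<and> u1* s3 - u3* s1 \<noteq> 0 \<and> u2* s3 - u3* s2 \<noteq> 0"
proof (cases "c 4 = 0")
  case False
  define p where "p = [:c 1, c 2, c 3, c 4:]"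
  have "\<exists>z. poly p z = 0"
    apply (rule fundamental_theorem_of_algebra_alt)
    using False by (auto simp: p_def)
  then obtain r1 where r1: "c 1 + r1 * (c 2 + r1 * (c 3 + r1 * c 4)) = 0" by (auto simp: p_def)
  define B where "B = c 3 + c 4 * r1"
  define C where "C = c 2 + c 3 * r1 + c 4 * r1^2"
  define w where "w = csqrt (B^2 - 4 * c 4 * C)"
  have w2: "w^2 = B^2 - 4 * c 4 * C" by (simp add: w_def)
  define r2 where "r2 = (- B + w) / (2 * c 4)"
  define r3 where "r3 = (- B - w) / (2 * c 4)"
  have h2: "2 * c 4 * r2 = - B + w" using False by (simp add: r2_def)
  have h3: "2 * c 4 * r3 = - B - w" using False by (simp add: r3_def)
  have v3: "c 3 = - c 4 * (r1 + r2 + r3)" using h2 h3 B_def False by algebra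
  have v2: "c 2 = c 4 * (r1*r2 + r1*r3 + r2*r3)" using h2 h3 B_def C_def w2 False by algebra
  have v1: "c 1 = - c 4 * (r1*r2*r3)" using h2 h3 B_def C_def w2 False r1 by algebra
  have "Delta c = - (c 4 ^ 4 * ((r1 - r2) * (r1 - r3) * (r2 - r3))^2)"
    unfolding Delta_def v1 v2 v3 by algebra
  with D have d: "r1 - r2 \<noteq> 0" "r1 - r3 \<noteq> 0" "r2 - r3 \<noteq> 0" by auto
  have f: "fc c 1 r = 0" if "r = r1 \<or> r = r2 \<or> r = r3" for r
    using that unfolding fc_def v1 v2 v3 by (elim disjE) (simp_all add: algebra_simps power2_eq_square power3_eq_cube)
  show ?thesis
    apply (rule exI[of _ 1], rule exI[of _ r1], rule exI[of _ 1], rule exI[of _ r2], rule exI[of _ 1], rule exI[of _ r3])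
    using f d by (auto simp: right_diff_distrib)
next
  case True
  have c3: "c 3 \<noteq> 0"
  proof
    assume "c 3 = 0"
    then have "Delta c = 0" using True by (simp add: Delta_def)
    with D show False by simp
  qed
  define w where "w = csqrt ((c 2)^2 - 4 * c 1 * c 3)"
  have w2: "w^2 = (c 2)^2 - 4 * c 1 * c 3" by (simp add: w_def)
  define r2 where "r2 = (- c 2 + w) / (2 * c 3)"
  define r3 where "r3 = (- c 2 - w) / (2 * c 3)"
  have h2: "2 * c 3 * r2 = - c 2 + w" using c3 by (simp add: r2_def)
  have h3: "2 * c 3 * r3 = - c 2 - w" using c3 by (simp add: r3_def)
  have "Delta c = - (c 3 ^ 2 * w^2)" using True w2 unfolding Delta_def by algebra
  with D have "w \<noteq> 0" by auto
  then have d: "r2 - r3 \<noteq> 0" using h2 h3 c3 by algebra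
  have f2: "fc c 1 r2 = 0" using h2 w2 c3 True unfolding fc1 by algebra
  have f3: "fc c 1 r3 = 0" using h3 w2 c3 True unfolding fc1 by algebra
  have f1: "fc c 0 1 = 0" using True unfolding fc_def by simp
  show ?thesis
    apply (rule exI[of _ 0], rule exI[of _ 1], rule exI[of _ 1], rule exI[of _ r2], rule exI[of _ 1], rule exI[of _ r3])
    using f1 f2 f3 d by (auto simp: right_diff_distrib)
qed


lemma cross6:
  fixes u1 u2 u3 s1 s2 s3 c1 c2 c3 c4 :: complex
  assumes "c1*u1^3 + c2*u1^2* s1+c3*u1* s1^2+c4* s1^3 = 0"
    "c1*u2^3 + c2*u2^2* s2+c3*u2* s2^2+c4* s2^3 = 0"
    "c1*u3^3 + c2*u3^2* s3+c3*u3* s3^2+c4* s3^3 = 0"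
  defines "D \<equiv> (u1* s2 - u2* s1)*(u1* s3 - u3* s1)*(u2* s3 - u3* s2)"
    and "q1 \<equiv> s1* s2* s3" and "q2 \<equiv> - (u1* s2* s3 + s1*u2* s3 + s1* s2*u3)"
    and "q3 \<equiv> u1*u2* s3 + u1* s2*u3 + s1*u2*u3" and "q4 \<equiv> - (u1*u2*u3)"
  shows "D * (c1*q2 - c2*q1) = 0 \<and> D * (c1*q3 - c3*q1) = 0 \<and> D * (c1*q4 - c4*q1) = 0 \<and>
         D * (c2*q3 - c3*q2) = 0 \<and> D * (c2*q4 - c4*q2) = 0 \<and> D * (c3*q4 - c4*q3) = 0"
  using assms(1-3) unfolding D_def q1_def q2_def q3_def q4_def
  by (intro conjI; algebra)

lemma Dlem:
  assumes r: "fc c u1 s1 = 0" "fc c u2 s2 = 0" "fc c u3 s3 = 0"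
    and d: "u1* s2 - u2* s1 \<noteq> 0" "u1* s3 - u3* s1 \<noteq> 0" "u2* s3 - u3* s2 \<noteq> 0"
    and cnz: "nonzero_vec 4 c"
  shows "Delta c \<noteq> 0"
proof -
  define D where "D = (u1* s2 - u2* s1)*(u1* s3 - u3* s1)*(u2* s3 - u3* s2)"
  define q :: "nat \<Rightarrow> complex" where "q k = (if k = 1 then s1* s2* s3 else if k = 2 then - (u1* s2* s3 + s1*u2* s3 + s1* s2*u3)
     else if k = 3 then u1*u2* s3 + u1* s2*u3 + s1*u2*u3 else - (u1*u2*u3))" for k
  have D0: "D \<noteq> 0" using d by (simp add: D_def)
  have cr: "D * (c 1*q 2 - c 2*q 1) = 0 \<and> D * (c 1*q 3 - c 3*q 1) = 0 \<and> D * (c 1*q 4 - c 4*q 1) = 0 \<and>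
         D * (c 2*q 3 - c 3*q 2) = 0 \<and> D * (c 2*q 4 - c 4*q 2) = 0 \<and> D * (c 3*q 4 - c 4*q 3) = 0"
    unfolding D_def q_def using cross6[of "c 1" u1 "c 2" s1 "c 3" "c 4" u2 s2 u3 s3] r unfolding fc_def by simp
  have cr2: "c j * q k = c k * q j" if "j \<in> {1..4}" "k \<in> {1..4}" for j k
  proof -
    have "j = 1 \<or> j = 2 \<or> j = 3 \<or> j = 4" "k = 1 \<or> k = 2 \<or> k = 3 \<or> k = 4" using that by auto
    then show ?thesis using cr D0 by (elim disjE) (auto simp: algebra_simps)
  qed
  have "Delta q = - (D^2)" unfolding Delta_def D_def by (simp add: q_def) algebra
  then have Dq: "Delta q \<noteq> 0" using D0 by simp
  have "\<exists>m\<in>{1..4}. q m \<noteq> 0"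
  proof (rule ccontr)
    assume H: "\<not> (\<exists>m\<in>{1..4}. q m \<noteq> 0)"
    then have "q 1 = 0" "q 2 = 0" "q 3 = 0" "q 4 = 0" by auto
    then have "Delta q = 0" by (simp add: Delta_def)
    with Dq show False by simp
  qed
  then obtain m where m: "m \<in> {1..4}" "q m \<noteq> 0" by blast
  define \<kappa> where "\<kappa> = c m / q m"
  have ck: "c k = \<kappa> * q k" if "k \<in> {1..4}" for k
    using cr2[OF that m(1)] m(2) by (simp add: \<kappa>_def field_simps)
  have "\<kappa> \<noteq> 0"
  proof
    assume "\<kappa> = 0"
    then have "c k = 0" if "k \<in> {1..4}" for k using ck[OF that] by simp
    with cnz show False unfolding nonzero_vec_def by auto
  qed
  have e1: "c 1 = \<kappa> * q 1" by (rule ck) simp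
  have e2: "c 2 = \<kappa> * q 2" by (rule ck) simp
  have e3: "c 3 = \<kappa> * q 3" by (rule ck) simp
  have e4: "c 4 = \<kappa> * q 4" by (rule ck) simp
  have "Delta c = \<kappa>^4 * Delta q"
    unfolding Delta_def e1 e2 e3 e4
    by algebra
  then show ?thesis using Dq \<open>\<kappa> \<noteq> 0\<close> by simp
qed

lemma rootlem: "X1=A1*B1 \<Longrightarrow> X2=A1*B2 \<Longrightarrow> X2=A2*B1 \<Longrightarrow> X3=A1*B3 \<Longrightarrow> X3=A2*B2 \<Longrightarrow> X4=A2*B3 \<Longrightarrow>
  c1*X1+c2*X2+c3*X3+c4*X4 = 0 \<Longrightarrow> X1 \<noteq> 0 \<or> X2 \<noteq> 0 \<or> X3 \<noteq> 0 \<or> X4 \<noteq> 0 \<Longrightarrow>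
  c1*A1^3 + c2*A1^2*A2+c3*A1*A2^2+c4*A2^3 = 0"
  for X1 X2 X3 X4 A1 A2 B1 B2 B3 c1 c2 c3 c4 :: complex
  by algebra

lemma nonprop: "X1=A1*B1 \<Longrightarrow> X2=A1*B2 \<Longrightarrow> X2=A2*B1 \<Longrightarrow> X3=A1*B3 \<Longrightarrow> X3=A2*B2 \<Longrightarrow> X4=A2*B3 \<Longrightarrow>
  Y1=D1*E1 \<Longrightarrow> Y2=D1*E2 \<Longrightarrow> Y2=D2*E1 \<Longrightarrow> Y3=D1*E3 \<Longrightarrow> Y3=D2*E2 \<Longrightarrow> Y4=D2*E3 \<Longrightarrow>
  ga*X1+gb*X2+gc*X3+gd*X4 = 1 \<Longrightarrow> ga*Y1+gb*Y2+gc*Y3+gd*Y4 = 0 \<Longrightarrow>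
  ha*X1+hb*X2+hc*X3+hd*X4 = 0 \<Longrightarrow> ha*Y1+hb*Y2+hc*Y3+hd*Y4 = 1 \<Longrightarrow>
  A1*D2 - D1*A2 \<noteq> 0"
  for X1 X2 X3 X4 A1 A2 B1 B2 B3 Y1 Y2 Y3 Y4 D1 D2 E1 E2 E3 ga gb gc gd ha hb hc hd :: complex
  by algebra

lemma vand1: "z1*u1^3 + z2*u2^3 + z3*u3^3 = 0 \<Longrightarrow>
  z1*u1^2* s1 + z2*u2^2* s2 + z3*u3^2* s3 = 0 \<Longrightarrow>
  z1*u1* s1^2 + z2*u2* s2^2 + z3*u3* s3^2 = 0 \<Longrightarrow>
  z1* s1^3 + z2* s2^3 + z3* s3^3 = 0 \<Longrightarrow>
  z1*u1*((u1* s2 - u2* s1)*(u1* s3 - u3* s1)) = 0 \<and> z1* s1*((u1* s2 - u2* s1)*(u1* s3 - u3* s1)) = 0"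
  for u1 u2 u3 s1 s2 s3 z1 z2 z3 :: complex
  by algebra
lemma z4: "z1*u1^3 + z2*u2^3 + z3*u3^3 + z4*y1 = 0 \<Longrightarrow>
  z1*u1^2* s1 + z2*u2^2* s2 + z3*u3^2* s3 + z4*y2 = 0 \<Longrightarrow>
  z1*u1* s1^2 + z2*u2* s2^2 + z3*u3* s3^2 + z4*y3 = 0 \<Longrightarrow>
  z1* s1^3 + z2* s2^3 + z3* s3^3 + z4*y4 = 0 \<Longrightarrow>
  c1*u1^3 + c2*u1^2* s1+c3*u1* s1^2+c4* s1^3 = 0 \<Longrightarrow>
  c1*u2^3 + c2*u2^2* s2+c3*u2* s2^2+c4* s2^3 = 0 \<Longrightarrow>
  c1*u3^3 + c2*u3^2* s3+c3*u3* s3^2+c4* s3^3 = 0 \<Longrightarrow>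
  z4 * (c1*y1+c2*y2+c3*y3+c4*y4) = 0"
  for u1 u2 u3 s1 s2 s3 c1 c2 c3 c4 y1 y2 y3 y4 z1 z2 z3 z4 :: complex
  by algebra

lemma z4g:
  fixes u1 u2 u3 s1 s2 s3 c1 c2 c3 c4 y1 y2 y3 y4 z1 z2 z3 z4 :: complex
  shows "c1*u1^3 + c2*u1^2 * s1+c3*u1 * s1^2+c4 * s1^3 = 0 \<Longrightarrow>
  c1*u2^3 + c2*u2^2 * s2+c3*u2 * s2^2+c4 * s2^3 = 0 \<Longrightarrow>
  c1*u3^3 + c2*u3^2 * s3+c3*u3 * s3^2+c4 * s3^3 = 0 \<Longrightarrow>
  z4 * (c1*y1+c2*y2+c3*y3+c4*y4) = c1*(z1*u1^3 + z2*u2^3 + z3*u3^3 + z4*y1)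
    + c2*(z1*u1^2 * s1 + z2*u2^2 * s2 + z3*u3^2 * s3 + z4*y2)
    + c3*(z1*u1 * s1^2 + z2*u2 * s2^2 + z3*u3 * s3^2 + z4*y3)
    + c4*(z1 * s1^3 + z2 * s2^3 + z3 * s3^3 + z4*y4)"
  by algebra

lemma vand:
  fixes u1 u2 u3 s1 s2 s3 z1 z2 z3 :: complex
  assumes "z1*u1^3 + z2*u2^3 + z3*u3^3 = 0"
  "z1*u1^2* s1 + z2*u2^2* s2 + z3*u3^2* s3 = 0"
  "z1*u1* s1^2 + z2*u2* s2^2 + z3*u3* s3^2 = 0"
  "z1* s1^3 + z2* s2^3 + z3* s3^3 = 0"
  "u1* s2 - u2* s1 \<noteq> 0" "u1* s3 - u3* s1 \<noteq> 0"
  shows "z1 = 0"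
proof -
  have "z1*u1*((u1* s2 - u2* s1)*(u1* s3 - u3* s1)) = 0 \<and> z1* s1*((u1* s2 - u2* s1)*(u1* s3 - u3* s1)) = 0"
    using vand1[OF assms(1-4)] .
  moreover have "u1 \<noteq> 0 \<or> s1 \<noteq> 0" using assms(5) by auto
  ultimately show ?thesis using assms(5,6) by auto
qed


lemma G:
  fixes A B C :: "nat \<Rightarrow> nat \<Rightarrow> complex"
  assumes d: "(\<lambda>i j k. T23 i j k - t * outer3 a b c i j k) = (\<lambda>i j k. \<Sum>l<3. outer3 (A l) (B l) (C l) i j k)"
    and cnz: "nonzero_vec 4 c"
  shows "Delta c \<noteq> 0"
proof -
  have row: "x m - t*a i*b j*dot4 c x = A 0 i * B 0 j * dot4 (C 0) x + A 1 i * B 1 j * dot4 (C 1) x + A 2 i * B 2 j * dot4 (C 2) x"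
    if "1 \<le> i" "i \<le> 2" "1 \<le> j" "j \<le> 3" "i + j = m + 1" for x i j m
    using key'[OF d that, of x] by (simp add: sum3)
  have hk: "x 1 = A 0 1 * B 0 1 * dot4 (C 0) x + A 1 1 * B 1 1 * dot4 (C 1) x + A 2 1 * B 2 1 * dot4 (C 2) x"
        "x 2 = A 0 1 * B 0 2 * dot4 (C 0) x + A 1 1 * B 1 2 * dot4 (C 1) x + A 2 1 * B 2 2 * dot4 (C 2) x"
        "x 2 = A 0 2 * B 0 1 * dot4 (C 0) x + A 1 2 * B 1 1 * dot4 (C 1) x + A 2 2 * B 2 1 * dot4 (C 2) x"
        "x 3 = A 0 1 * B 0 3 * dot4 (C 0) x + A 1 1 * B 1 3 * dot4 (C 1) x + A 2 1 * B 2 3 * dot4 (C 2) x"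
        "x 3 = A 0 2 * B 0 2 * dot4 (C 0) x + A 1 2 * B 1 2 * dot4 (C 1) x + A 2 2 * B 2 2 * dot4 (C 2) x"
        "x 4 = A 0 2 * B 0 3 * dot4 (C 0) x + A 1 2 * B 1 3 * dot4 (C 1) x + A 2 2 * B 2 3 * dot4 (C 2) x"
    if "dot4 c x = 0" for x
    using row[of 1 1 1 x] row[of 1 2 2 x] row[of 2 1 2 x] row[of 1 3 3 x] row[of 2 2 3 x] row[of 2 3 4 x] that
    by simp_all
  define M where "M i = (if i = 1 then C 0 else if i = 2 then C 1 else if i = 3 then C 2 else c)" for i :: nat
  have inj: "x 1 = 0 \<and> x 2 = 0 \<and> x 3 = 0 \<and> x 4 = 0"
    if "dot4 (M 1) x = 0" "dot4 (M 2) x = 0" "dot4 (M 3) x = 0" "dot4 (M 4) x = 0" for x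
  proof -
    have "dot4 (C 0) x = 0" "dot4 (C 1) x = 0" "dot4 (C 2) x = 0" "dot4 c x = 0"
      using that by (simp_all add: M_def)
    then show ?thesis using hk[of x] by simp
  qed
  obtain X0 where X0: "dot4 (C 0) X0 = 1" "dot4 (C 1) X0 = 0" "dot4 (C 2) X0 = 0" "dot4 c X0 = 0"
    using solve4d[where m=M and ya=1 and yb=0 and yc=0 and yd=0, OF inj] by (auto simp: M_def)
  obtain X1 where X1: "dot4 (C 0) X1 = 0" "dot4 (C 1) X1 = 1" "dot4 (C 2) X1 = 0" "dot4 c X1 = 0"
    using solve4d[where m=M and ya=0 and yb=1 and yc=0 and yd=0, OF inj] by (auto simp: M_def)
  obtain X2 where X2: "dot4 (C 0) X2 = 0" "dot4 (C 1) X2 = 0" "dot4 (C 2) X2 = 1" "dot4 c X2 = 0"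
    using solve4d[where m=M and ya=0 and yb=0 and yc=1 and yd=0, OF inj] by (auto simp: M_def)
  have H0_1: "X0 1 = A 0 1 * B 0 1" using hk(1)[OF X0(4)] X0(1-3) by simp
  have H0_2: "X0 2 = A 0 1 * B 0 2" using hk(2)[OF X0(4)] X0(1-3) by simp
  have H0_3: "X0 2 = A 0 2 * B 0 1" using hk(3)[OF X0(4)] X0(1-3) by simp
  have H0_4: "X0 3 = A 0 1 * B 0 3" using hk(4)[OF X0(4)] X0(1-3) by simp
  have H0_5: "X0 3 = A 0 2 * B 0 2" using hk(5)[OF X0(4)] X0(1-3) by simp
  have H0_6: "X0 4 = A 0 2 * B 0 3" using hk(6)[OF X0(4)] X0(1-3) by simp
  note H0 = H0_1 H0_2 H0_3 H0_4 H0_5 H0_6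
  have H1_1: "X1 1 = A 1 1 * B 1 1" using hk(1)[OF X1(4)] X1(1-3) by simp
  have H1_2: "X1 2 = A 1 1 * B 1 2" using hk(2)[OF X1(4)] X1(1-3) by simp
  have H1_3: "X1 2 = A 1 2 * B 1 1" using hk(3)[OF X1(4)] X1(1-3) by simp
  have H1_4: "X1 3 = A 1 1 * B 1 3" using hk(4)[OF X1(4)] X1(1-3) by simp
  have H1_5: "X1 3 = A 1 2 * B 1 2" using hk(5)[OF X1(4)] X1(1-3) by simp
  have H1_6: "X1 4 = A 1 2 * B 1 3" using hk(6)[OF X1(4)] X1(1-3) by simp
  note H1 = H1_1 H1_2 H1_3 H1_4 H1_5 H1_6
  have H2_1: "X2 1 = A 2 1 * B 2 1" using hk(1)[OF X2(4)] X2(1-3) by simp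
  have H2_2: "X2 2 = A 2 1 * B 2 2" using hk(2)[OF X2(4)] X2(1-3) by simp
  have H2_3: "X2 2 = A 2 2 * B 2 1" using hk(3)[OF X2(4)] X2(1-3) by simp
  have H2_4: "X2 3 = A 2 1 * B 2 3" using hk(4)[OF X2(4)] X2(1-3) by simp
  have H2_5: "X2 3 = A 2 2 * B 2 2" using hk(5)[OF X2(4)] X2(1-3) by simp
  have H2_6: "X2 4 = A 2 2 * B 2 3" using hk(6)[OF X2(4)] X2(1-3) by simp
  note H2 = H2_1 H2_2 H2_3 H2_4 H2_5 H2_6
  have nz0: "X0 1 \<noteq> 0 \<or> X0 2 \<noteq> 0 \<or> X0 3 \<noteq> 0 \<or> X0 4 \<noteq> 0" using X0(1) by (auto simp: dot4_def)
  have nz1: "X1 1 \<noteq> 0 \<or> X1 2 \<noteq> 0 \<or> X1 3 \<noteq> 0 \<or> X1 4 \<noteq> 0" using X1(2) by (auto simp: dot4_def)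
  have nz2: "X2 1 \<noteq> 0 \<or> X2 2 \<noteq> 0 \<or> X2 3 \<noteq> 0 \<or> X2 4 \<noteq> 0" using X2(3) by (auto simp: dot4_def)
  have r0: "fc c (A 0 1) (A 0 2) = 0"
    unfolding fc_def by (rule rootlem[OF H0 _ nz0]) (use X0(4) in \<open>simp add: dot4_def\<close>)
  have r1: "fc c (A 1 1) (A 1 2) = 0"
    unfolding fc_def by (rule rootlem[OF H1 _ nz1]) (use X1(4) in \<open>simp add: dot4_def\<close>)
  have r2: "fc c (A 2 1) (A 2 2) = 0"
    unfolding fc_def by (rule rootlem[OF H2 _ nz2]) (use X2(4) in \<open>simp add: dot4_def\<close>)
  have p01: "A 0 1 * A 1 2 - A 1 1 * A 0 2 \<noteq> 0"
    by (rule nonprop[OF H0 H1, where ga="C 0 1" and gb="C 0 2" and gc="C 0 3" and gd="C 0 4" and ha="C 1 1" and hb="C 1 2" and hc="C 1 3" and hd="C 1 4"]) (use X0 X1 in \<open>simp_all add: dot4_def\<close>)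
  have p02: "A 0 1 * A 2 2 - A 2 1 * A 0 2 \<noteq> 0"
    by (rule nonprop[OF H0 H2, where ga="C 0 1" and gb="C 0 2" and gc="C 0 3" and gd="C 0 4" and ha="C 2 1" and hb="C 2 2" and hc="C 2 3" and hd="C 2 4"]) (use X0 X2 in \<open>simp_all add: dot4_def\<close>)
  have p12: "A 1 1 * A 2 2 - A 2 1 * A 1 2 \<noteq> 0"
    by (rule nonprop[OF H1 H2, where ga="C 1 1" and gb="C 1 2" and gc="C 1 3" and gd="C 1 4" and ha="C 2 1" and hb="C 2 2" and hc="C 2 3" and hd="C 2 4"]) (use X1 X2 in \<open>simp_all add: dot4_def\<close>)
  show ?thesis by (rule Dlem[OF r0 r1 r2 p01 p02 p12 cnz])
qed


lemma H:
  assumes hk1: "a 2 * b 2 - a 1 * b 3 = 0" and hk2: "a 2 * b 1 - a 1 * b 2 = 0"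
    and ps: "psi a b c \<noteq> 0" and D: "Delta c \<noteq> 0"
  shows "decomp (\<lambda>i j k. T23 i j k - (1 / psi a b c) * outer3 a b c i j k) 3"
proof -
  obtain u1 s1 u2 s2 u3 s3 where rt: "fc c u1 s1 = 0" "fc c u2 s2 = 0" "fc c u3 s3 = 0"
     and dd: "u1* s2 - u2* s1 \<noteq> 0" "u1* s3 - u3* s1 \<noteq> 0" "u2* s3 - u3* s2 \<noteq> 0"
    using roots[OF D] by blast
  define t where "t = 1 / psi a b c"
  define y :: "nat \<Rightarrow> complex" where "y m = (if m = 1 then a 1 * b 1 else if m = 2 then a 1 * b 2
     else if m = 3 then a 1 * b 3 else a 2 * b 3)" for m
  define M :: "nat \<Rightarrow> nat \<Rightarrow> complex" where "M m = (\<lambda>n. if n = 1 then u1^(4-m) * s1^(m-1)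
     else if n = 2 then u2^(4-m) * s2^(m-1) else if n = 3 then u3^(4-m) * s3^(m-1) else y m)" for m
  have Md: "dot4 (M 1) z = z 1*u1^3 + z 2*u2^3 + z 3*u3^3 + z 4*y 1"
     "dot4 (M 2) z = z 1*u1^2 * s1 + z 2*u2^2 * s2 + z 3*u3^2 * s3 + z 4*y 2"
     "dot4 (M 3) z = z 1*u1 * s1^2 + z 2*u2 * s2^2 + z 3*u3 * s3^2 + z 4*y 3"
     "dot4 (M 4) z = z 1 * s1^3 + z 2 * s2^3 + z 3 * s3^3 + z 4*y 4" for z
    by (simp_all add: M_def dot4_def algebra_simps)
  have psy: "psi a b c = c 1 * y 1 + c 2 * y 2 + c 3 * y 3 + c 4 * y 4" by (simp add: psi_def y_def algebra_simps)
  have zid: "z 4 * psi a b c = c 1 * dot4 (M 1) z + c 2 * dot4 (M 2) z + c 3 * dot4 (M 3) z + c 4 * dot4 (M 4) z" for z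
    unfolding Md psy
    by (rule z4g) (use rt in \<open>simp_all add: fc_def\<close>)
  have dd': "u2* s1 - u1* s2 \<noteq> 0" "u3* s1 - u1* s3 \<noteq> 0" "u3* s2 - u2* s3 \<noteq> 0"
    using dd by (auto simp: algebra_simps)
  have inj: "z 1 = 0 \<and> z 2 = 0 \<and> z 3 = 0 \<and> z 4 = 0"
    if "dot4 (M 1) z = 0" "dot4 (M 2) z = 0" "dot4 (M 3) z = 0" "dot4 (M 4) z = 0" for z
  proof -
    have "z 4 * psi a b c = 0" using zid[of z] that by simp
    then have z4: "z 4 = 0" using ps by simp
    have E: "z 1*u1^3 + z 2*u2^3 + z 3*u3^3 = 0"
     "z 1*u1^2 * s1 + z 2*u2^2 * s2 + z 3*u3^2 * s3 = 0"
     "z 1*u1 * s1^2 + z 2*u2 * s2^2 + z 3*u3 * s3^2 = 0"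
     "z 1 * s1^3 + z 2 * s2^3 + z 3 * s3^3 = 0" using that z4 unfolding Md by simp_all
    have "z 1 = 0" by (rule vand[OF E dd(1) dd(2)])
    moreover have "z 2 = 0"
    proof -
      have E2: "z 2*u2^3 + z 1*u1^3 + z 3*u3^3 = 0"
       "z 2*u2^2 * s2 + z 1*u1^2 * s1 + z 3*u3^2 * s3 = 0"
       "z 2*u2 * s2^2 + z 1*u1 * s1^2 + z 3*u3 * s3^2 = 0"
       "z 2 * s2^3 + z 1 * s1^3 + z 3 * s3^3 = 0" using E by (simp_all add: ac_simps)
      show ?thesis by (rule vand[OF E2 dd'(1) dd(3)])
    qed
    moreover have "z 3 = 0"
    proof -
      have E3: "z 3*u3^3 + z 1*u1^3 + z 2*u2^3 = 0"
       "z 3*u3^2 * s3 + z 1*u1^2 * s1 + z 2*u2^2 * s2 = 0"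
       "z 3*u3 * s3^2 + z 1*u1 * s1^2 + z 2*u2 * s2^2 = 0"
       "z 3 * s3^3 + z 1 * s1^3 + z 2 * s2^3 = 0" using E by (simp_all add: ac_simps)
      show ?thesis by (rule vand[OF E3 dd'(2) dd'(3)])
    qed
    ultimately show ?thesis using z4 by simp
  qed
  have ex: "\<forall>k::nat. \<exists>z. dot4 (M 1) z = (if k = 1 then 1 else 0) \<and> dot4 (M 2) z = (if k = 2 then 1 else 0)
      \<and> dot4 (M 3) z = (if k = 3 then 1 else 0) \<and> dot4 (M 4) z = (if k = 4 then 1 else 0)"
    using solve4d[where m=M, OF inj] by blast
  from choice[OF ex] obtain Z :: "nat \<Rightarrow> nat \<Rightarrow> complex" where Z: "\<And>k. dot4 (M 1) (Z k) = (if k = 1 then 1 else 0) \<and> dot4 (M 2) (Z k) = (if k = 2 then 1 else 0)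
      \<and> dot4 (M 3) (Z k) = (if k = 3 then 1 else 0) \<and> dot4 (M 4) (Z k) = (if k = 4 then 1 else 0)"
    by blast
  have Z4: "Z k 4 = t * c k" if "k \<in> {1..4}" for k
  proof -
    have "Z k 4 * psi a b c = c k"
      using zid[of "Z k"] Z[of k] that by (auto simp: atLeastAtMost_iff le_Suc_eq eval_nat_numeral)
    then show ?thesis using ps by (simp add: t_def field_simps)
  qed
  have Zm: "dot4 (M m) (Z k) = (if k = m then 1 else 0)" if "m \<in> {1..4}" for m k
  proof -
    have "m = 1 \<or> m = 2 \<or> m = 3 \<or> m = 4" using that by auto
    then show ?thesis using Z[of k] by auto
  qed
  define U where "U l = (if l = (0::nat) then u1 else if l = 1 then u2 else u3)" for l
  define V where "V l = (if l = (0::nat) then s1 else if l = 1 then s2 else s3)" for l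
  define A' where "A' l = (\<lambda>i::nat. if i = 1 then U l else V l)" for l
  define B' where "B' l = (\<lambda>j::nat. if j = 1 then U l ^ 2 else if j = 2 then U l * V l else V l ^ 2)" for l
  define C' where "C' l = (\<lambda>k. Z k (if l = (0::nat) then 1 else if l = 1 then 2 else 3))" for l
  have "T23 i j k - t * outer3 a b c i j k = (\<Sum>l<3. outer3 (A' l) (B' l) (C' l) i j k)" for i j k
  proof (cases "in_box i j k")
    case True
    then have ij: "(i = 1 \<or> i = 2) \<and> (j = 1 \<or> j = 2 \<or> j = 3)" and k: "k \<in> {1..4}"
      unfolding in_box_def by auto
    have hh: "a 2 * b 1 = a 1 * b 2" "a 2 * b 2 = a 1 * b 3" "a 2 * b (Suc 0) = a (Suc 0) * b 2"
      "a 2 * b 2 = a (Suc 0) * b 3" using hk1 hk2 by simp_all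
    have Lk: "T23 i j k - t * outer3 a b c i j k = (if k = i + j - 1 then 1 else 0) - t * y (i + j - 1) * c k"
      unfolding T23_box[OF True] outer3_def if_P[OF True]
      using ij by (elim conjE disjE; simp add: y_def hh)
    have Rk: "(\<Sum>l<3. outer3 (A' l) (B' l) (C' l) i j k) = dot4 (M (i + j - 1)) (Z k) - Z k 4 * y (i + j - 1)"
      unfolding sum3 outer3_def if_P[OF True] dot4_def
      using ij by (elim conjE disjE; simp add: A'_def B'_def C'_def U_def V_def M_def; simp add: algebra_simps power2_eq_square power3_eq_cube)
    have m: "i + j - 1 \<in> {1..4}" using ij by auto
    show ?thesis unfolding Lk Rk Zm[OF m] Z4[OF k] by simp
  next
    case False
    then show ?thesis by (simp add: T23_out outer3_def)
  qed
  then show ?thesis unfolding decomp_def t_def by blast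
qed


lemma decomp_St5: "decomp (\<lambda>i j k. T23 i j k - t * outer3 a b c i j k) 5"
proof -
  obtain A B C :: "nat \<Rightarrow> nat \<Rightarrow> complex" where T: "T23 = (\<lambda>i j k. \<Sum>l<4. outer3 (A l) (B l) (C l) i j k)"
    using T23_decomp unfolding decomp_def by blast
  define A' where "A' l = (if l < 4 then A l else (\<lambda>i. - t * a i))" for l
  define B' where "B' l = (if l < 4 then B l else b)" for l
  define C' where "C' l = (if l < 4 then C l else c)" for l
  have "T23 i j k - t * outer3 a b c i j k = (\<Sum>l<5. outer3 (A' l) (B' l) (C' l) i j k)" for i j k
  proof -
    have five: "(5::nat) = Suc 4" by simp
    have "(\<Sum>l<5. outer3 (A' l) (B' l) (C' l) i j k) = (\<Sum>l<4. outer3 (A' l) (B' l) (C' l) i j k) + outer3 (A' 4) (B' 4) (C' 4) i j k"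
      unfolding five by (rule sum.lessThan_Suc)
    also have "(\<Sum>l<4. outer3 (A' l) (B' l) (C' l) i j k) = (\<Sum>l<4. outer3 (A l) (B l) (C l) i j k)"
      by (rule sum.cong) (auto simp: A'_def B'_def C'_def)
    also have "outer3 (A' 4) (B' 4) (C' 4) i j k = - t * outer3 a b c i j k"
      by (simp add: A'_def B'_def C'_def outer3_def)
    finally show ?thesis by (simp add: T)
  qed
  then show ?thesis unfolding decomp_def by blast
qed

lemma bcond:
  assumes "a 2 * b 2 - a 1 * b 3 = 0" "a 2 * b 1 - a 1 * b 2 = 0" "nonzero_vec 2 a"
  shows "b 2 ^ 2 - b 1 * b 3 = (0::complex)"
proof -
  obtain i where i: "1 \<le> i" "i \<le> 2" "a i \<noteq> 0" using assms(3) unfolding nonzero_vec_def by blast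
  then have "i = 1 \<or> i = 2" by auto
  then have "a 1 \<noteq> 0 \<or> a 2 \<noteq> 0" using i(3) by auto
  then show ?thesis using assms(1,2) by algebra
qed

theorem mainTheorem11:
  fixes a b c :: "nat \<Rightarrow> complex"
  assumes "nonzero_vec 2 a" and "nonzero_vec 3 b" and "nonzero_vec 4 c"
  shows "outer3 a b c \<in> decomposition_locus T23 \<longleftrightarrow>
    (b 2 ^ 2 - b 1 * b 3 = 0 \<and> a 2 * b 2 - a 1 * b 3 = 0 \<and> a 2 * b 1 - a 1 * b 2 = 0
     \<and> psi a b c \<noteq> 0 \<and> Delta c \<noteq> 0)"
proof -
  have mem: "outer3 a b c \<in> decomposition_locus T23 \<longleftrightarrow>
     (\<exists>t. decomp (\<lambda>i j k. T23 i j k - t * outer3 a b c i j k) 3)"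
  proof
    assume "outer3 a b c \<in> decomposition_locus T23"
    then obtain t where "tensor_rank (\<lambda>i j k. T23 i j k - t * outer3 a b c i j k) = tensor_rank T23 - 1"
      unfolding decomposition_locus_def by auto
    then have "tensor_rank (\<lambda>i j k. T23 i j k - t * outer3 a b c i j k) = 3" by (simp add: T23_rank)
    with rank_decomp[OF decomp_St5[of t a b c]]
    show "\<exists>t. decomp (\<lambda>i j k. T23 i j k - t * outer3 a b c i j k) 3" by metis
  next
    assume "\<exists>t. decomp (\<lambda>i j k. T23 i j k - t * outer3 a b c i j k) 3"
    then obtain t where d: "decomp (\<lambda>i j k. T23 i j k - t * outer3 a b c i j k) 3" by blast
    have "tensor_rank (\<lambda>i j k. T23 i j k - t * outer3 a b c i j k) = 3"
    proof (rule rank_eq[OF d])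
      fix r :: nat assume "r < 3"
      then show "\<not> decomp (\<lambda>i j k. T23 i j k - t * outer3 a b c i j k) r" using Fge3 by fastforce
    qed
    then have "tensor_rank (\<lambda>i j k. T23 i j k - t * outer3 a b c i j k) = tensor_rank T23 - 1"
      by (simp add: T23_rank)
    then show "outer3 a b c \<in> decomposition_locus T23"
      unfolding decomposition_locus_def using assms by blast
  qed
  show ?thesis
  proof
    assume "outer3 a b c \<in> decomposition_locus T23"
    then obtain t where d: "decomp (\<lambda>i j k. T23 i j k - t * outer3 a b c i j k) 3" using mem by blast
    from Fle3[OF d] have F: "t * psi a b c = 1" "a 2 * b 2 - a 1 * b 3 = 0" "a 2 * b 1 - a 1 * b 2 = 0" by auto
    obtain A B C :: "nat \<Rightarrow> nat \<Rightarrow> complex" where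
      dd: "(\<lambda>i j k. T23 i j k - t * outer3 a b c i j k) = (\<lambda>i j k. \<Sum>l<3. outer3 (A l) (B l) (C l) i j k)"
      using d unfolding decomp_def by blast
    have "Delta c \<noteq> 0" by (rule G[OF dd assms(3)])
    moreover have "psi a b c \<noteq> 0" using F(1) by auto
    moreover have "b 2 ^ 2 - b 1 * b 3 = 0" by (rule bcond[OF F(2,3) assms(1)])
    ultimately show "b 2 ^ 2 - b 1 * b 3 = 0 \<and> a 2 * b 2 - a 1 * b 3 = 0 \<and> a 2 * b 1 - a 1 * b 2 = 0
     \<and> psi a b c \<noteq> 0 \<and> Delta c \<noteq> 0" using F by simp
  next
    assume C: "b 2 ^ 2 - b 1 * b 3 = 0 \<and> a 2 * b 2 - a 1 * b 3 = 0 \<and> a 2 * b 1 - a 1 * b 2 = 0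
     \<and> psi a b c \<noteq> 0 \<and> Delta c \<noteq> 0"
    then have "decomp (\<lambda>i j k. T23 i j k - (1 / psi a b c) * outer3 a b c i j k) 3"
      using H by blast
    then show "outer3 a b c \<in> decomposition_locus T23" using mem by blast
  qed
qed

end
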